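(* Let $n\ge1$, $b>0$, let $\varepsilon_1,\dots,\varepsilon_n$ be i.i.d. with $\mathbf{P}(\varepsilon_i=\pm1)=\frac12$ and $R_n:=\sum_{i=1}^n\varepsilon_i$. For $y\in\mathbb{R}$ put $x:=\frac{y\sqrt n}{2b}+\frac n2$. Let $u_*$ be the unique solution in $(0,1)$ of $\ln\frac{1-u}{-\ln u}-1-\frac12\frac{(1+u)\ln u}{1-u}=0$ (numerically $u_*=0.00505778\ldots$), $u_{**}:=\frac{u_*}{1-u_*}$, and $j_{**}:=\big\lfloor\frac{n-u_{**}}{1+u_{**}}\big\rfloor$. Then $$c_3\,\mathbf{P}^{\mathrm{Lin,LC}}\Big(R_n\ge1+\frac{y\sqrt n}{b}\Big)\le c_3\,\mathbf{P}^{\mathrm{LC}}\Big(R_n\ge\frac{y\sqrt n}{b}\Big)$$ for all $y$ with $x\le j_{**}$, where $c_3:=2e^3/9$. Moreover, if $n\le196$, this inequality holds for all $y$ with $x\le n$.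
   Context: $z\mapsto\mathbf{P}^{\mathrm{LC}}(R_n\ge z)$ is the least log-concave majorant on $\mathbb{R}$ of $z\mapsto\mathbf{P}(R_n\ge z)$. $\mathbf{P}^{\mathrm{Lin}}(R_n\ge z)$ is the linear interpolation of $z\mapsto\mathbf{P}(R_n\ge z)$ over the lattice $\{n+2k:k\in\mathbb{Z}\}$: $\mathbf{P}^{\mathrm{Lin}}(R_n\ge z)=(1-\gamma)\mathbf{P}(R_n\ge n+2k)+\gamma\mathbf{P}(R_n\ge n+2k+2)$ whenever $\gamma:=(z-n-2k)/2\in[0,1]$; $\mathbf{P}^{\mathrm{Lin,LC}}(R_n\ge\cdot)$ is the least log-concave majorant of $\mathbf{P}^{\mathrm{Lin}}(R_n\ge\cdot)$ on $\mathbb{R}$. Least log-concave majorant of $\phi\ge0$: the smallest $g\ge\phi$ with $g\ge0$ and $\ln g$ concave (values $-\infty$ allowed). *)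

theory Defs
  imports "HOL-Probability.Probability"
begin

definition rademacher_sum :: "nat \<Rightarrow> int pmf" where
  "rademacher_sum n =
     map_pmf (\<lambda>eps. \<Sum>i<n. eps i) (Pi_pmf {..<n} 0 (\<lambda>_. pmf_of_set {-1, 1::int}))"

definition tailR :: "nat \<Rightarrow> real \<Rightarrow> real" where
  "tailR n z = measure_pmf.prob (rademacher_sum n) {r. z \<le> real_of_int r}"

definition log_concave :: "(real \<Rightarrow> real) \<Rightarrow> bool" where
  "log_concave g \<longleftrightarrow> (\<forall>x. 0 \<le> g x) \<and>
     (\<forall>x y t. 0 < t \<and> t < 1 \<longrightarrow> g x powr (1 - t) * g y powr t \<le> g ((1 - t) * x + t * y))"

definition lc_majorant :: "(real \<Rightarrow> real) \<Rightarrow> real \<Rightarrow> real" where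
  "lc_majorant \<phi> z = Inf ((\<lambda>g. g z) ` {g. log_concave g \<and> (\<forall>x. \<phi> x \<le> g x)})"

text \<open>Linear interpolation of P(R_n \<ge> .) over the lattice n + 2Z.\<close>
definition tailR_lin :: "nat \<Rightarrow> real \<Rightarrow> real" where
  "tailR_lin n z =
     (let k = \<lfloor>(z - real n) / 2\<rfloor>; \<gamma> = (z - real n - 2 * real_of_int k) / 2
      in (1 - \<gamma>) * tailR n (real n + 2 * real_of_int k)
         + \<gamma> * tailR n (real n + 2 * real_of_int k + 2))"

definition u_star :: real where
  "u_star = (THE u. 0 < u \<and> u < 1 \<and>
      ln ((1 - u) / (- ln u)) - 1 - (1/2) * ((1 + u) * ln u / (1 - u)) = 0)"

definition u_star2 :: real where
  "u_star2 = u_star / (1 - u_star)"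

definition j_star2 :: "nat \<Rightarrow> int" where
  "j_star2 n = \<lfloor>(real n - u_star2) / (1 + u_star2)\<rfloor>"

definition c3 :: real where
  "c3 = 2 * exp 3 / 9"

end

theory Submission
  imports Defs
begin


lemma exp_gt_lin: "y \<noteq> 0 \<Longrightarrow> 1 + y < exp (y::real)"
  using exp_minus_greater[of "-y"] by simp

lemma pow_tangent_strict:
  fixes s t :: real
  assumes s: "0 < s" "s < 1" and t: "0 < t" "t \<noteq> 1"
  shows "t powr s < (1 - s) + s * t"
proof -
  define a where "a = ln t"
  have a0: "a \<noteq> 0" using t by (simp add: a_def)
  have tE: "t = exp a" using t by (simp add: a_def)
  have pE: "t powr s = exp (s * a)" using t by (simp add: powr_def a_def mult.commute)
  define E where "E = exp (s * a)"
  have E0: "0 < E" by (simp add: E_def)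
  have h1: "E * (1 - s * a) < 1"
  proof -
    have "1 + (- (s*a)) < exp (- (s*a))" using a0 s by (intro exp_gt_lin) simp
    hence "E * (1 - s*a) < E * exp (- (s*a))" using E0 by (intro mult_strict_left_mono) auto
    also have "E * exp (- (s*a)) = 1" by (simp add: E_def exp_minus field_simps)
    finally show ?thesis .
  qed
  have h2: "E * (1 + (1 - s) * a) < exp a"
  proof -
    have "1 + ((1-s)*a) < exp ((1-s)*a)" using a0 s by (intro exp_gt_lin) simp
    hence "E * (1 + (1-s)*a) < E * exp ((1-s)*a)" using E0 by (intro mult_strict_left_mono) auto
    also have "E * exp ((1-s)*a) = exp a" by (simp add: E_def flip: exp_add) (simp add: algebra_simps)
    finally show ?thesis .
  qed
  have "(1-s) * (E * (1 - s * a)) + s * (E * (1 + (1 - s) * a)) < (1 - s) * 1 + s * exp a"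
    using h1 h2 s by (intro add_strict_mono mult_strict_left_mono) auto
  moreover have "(1-s) * (E * (1 - s * a)) + s * (E * (1 + (1 - s) * a)) = E"
    by (simp add: algebra_simps)
  ultimately show ?thesis using pE tE by (simp add: E_def)
qed

lemma pow_tangent:
  fixes s t :: real
  assumes s: "0 \<le> s" "s \<le> 1" and t: "0 < t"
  shows "t powr s \<le> (1 - s) + s * t"
proof (cases "s = 0 \<or> s = 1 \<or> t = 1")
  case True then show ?thesis using t by auto
next
  case False then show ?thesis using pow_tangent_strict[of s t] s t by force
qed

lemma conc_comb:
  fixes a b l s :: real
  assumes l: "0 \<le> l" "l \<le> 1" and ab: "0 < a" "0 < b" and s: "0 \<le> s" "s \<le> 1"
  shows "l * a powr s + (1 - l) * b powr s \<le> (l * a + (1 - l) * b) powr s"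
proof -
  define r where "r = l * a + (1 - l) * b"
  have r0: "0 < r"
  proof (cases "l = 0")
    case True then show ?thesis using ab by (simp add: r_def)
  next
    case False then have "0 < l * a" using l ab by simp
    moreover have "0 \<le> (1-l) * b" using l ab by simp
    ultimately show ?thesis by (simp add: r_def)
  qed
  define P where "P = r powr s"
  have P0: "0 < P" using r0 by (simp add: P_def)
  have ea: "a powr s = P * (a / r) powr s" using r0 ab by (simp add: P_def powr_divide)
  have eb: "b powr s = P * (b / r) powr s" using r0 ab by (simp add: P_def powr_divide)
  have ia: "a powr s \<le> P * ((1 - s) + s * (a / r))"
    unfolding ea using P0 pow_tangent[of s "a/r"] s ab r0 by (intro mult_left_mono) auto
  have ib: "b powr s \<le> P * ((1 - s) + s * (b / r))"
    unfolding eb using P0 pow_tangent[of s "b/r"] s ab r0 by (intro mult_left_mono) auto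
  have "l * a powr s + (1 - l) * b powr s \<le> l * (P * ((1 - s) + s * (a / r))) + (1 - l) * (P * ((1 - s) + s * (b / r)))"
    using ia ib l by (intro add_mono mult_left_mono) auto
  also have "\<dots> = P * ((1 - s) + s * ((l * a + (1 - l) * b) / r))"
    using r0 by (simp add: field_simps)
  also have "\<dots> = P" using r0 by (simp add: r_def)
  finally show ?thesis by (simp add: P_def r_def)
qed

lemma conc_comb_strict:
  fixes a b l s :: real
  assumes l: "0 < l" "l < 1" and ab: "0 < a" "0 < b" "a \<noteq> b" and s: "0 < s" "s < 1"
  shows "l * a powr s + (1 - l) * b powr s < (l * a + (1 - l) * b) powr s"
proof -
  define r where "r = l * a + (1 - l) * b"
  have r0: "0 < r" using l ab by (simp add: r_def add_pos_pos)
  have ar: "a \<noteq> r"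
  proof
    assume "a = r"
    hence "(1 - l) * a = (1 - l) * b" by (simp add: r_def algebra_simps)
    thus False using l ab by simp
  qed
  define P where "P = r powr s"
  have P0: "0 < P" using r0 by (simp add: P_def)
  have ea: "a powr s = P * (a / r) powr s" using r0 ab by (simp add: P_def powr_divide)
  have eb: "b powr s = P * (b / r) powr s" using r0 ab by (simp add: P_def powr_divide)
  have ia: "a powr s < P * ((1 - s) + s * (a / r))"
    unfolding ea using P0 pow_tangent_strict[of s "a/r"] s ab r0 ar by (intro mult_strict_left_mono) auto
  have ib: "b powr s \<le> P * ((1 - s) + s * (b / r))"
    unfolding eb using P0 pow_tangent[of s "b/r"] s ab r0 by (intro mult_left_mono) auto
  have "l * a powr s + (1 - l) * b powr s < l * (P * ((1 - s) + s * (a / r))) + (1 - l) * (P * ((1 - s) + s * (b / r)))"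
    using ia ib l by (intro add_less_le_mono mult_strict_left_mono mult_left_mono) auto
  also have "\<dots> = P * ((1 - s) + s * ((l * a + (1 - l) * b) / r))"
    using r0 by (simp add: field_simps)
  also have "\<dots> = P" using r0 by (simp add: r_def)
  finally show ?thesis by (simp add: P_def r_def)
qed

definition phi :: "real \<Rightarrow> real \<Rightarrow> real" where
  "phi r s = r powr s - (1/2 - s) - (1/2 + s) * r"

definition psi :: "real \<Rightarrow> real" where
  "psi u = ln ((1 - u) / (- ln u)) - 1 - (1/2) * ((1 + u) * ln u / (1 - u))"

lemma phi_mono:
  assumes u: "0 < u" "u \<le> r" "r \<le> 1" and s: "0 \<le> s" "s \<le> 1" and p: "0 \<le> phi u s"
  shows "0 \<le> phi r s"
proof (cases "u = 1")
  case True then show ?thesis using p u by auto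
next
  case False
  hence u1: "u < 1" using u by simp
  define l where "l = (1 - r) / (1 - u)"
  have l: "0 \<le> l" "l \<le> 1" using u u1 by (auto simp: l_def field_simps)
  have l1u: "l * (1 - u) = 1 - r" using u1 by (simp add: l_def)
  have rr: "r = l * u + (1 - l) * 1"
  proof -
    have "l * u + (1 - l) * 1 = 1 - l * (1 - u)" by (simp add: algebra_simps)
    thus ?thesis using l1u by simp
  qed
  have H: "l * u powr s + (1 - l) * 1 powr s \<le> (l * u + (1 - l) * 1) powr s"
    using conc_comb[OF l u(1) _ s, of 1] by simp
  hence H': "l * u powr s + (1 - l) \<le> r powr s" using rr by simp
  have e: "r - l * u = 1 - l" using rr by simp
  have "phi r s - l * phi u s = r powr s - l * u powr s - (1/2 - s) * (1 - l) - (1/2 + s) * (r - l * u)"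
    unfolding phi_def by (simp add: algebra_simps diff_divide_distrib add_divide_distrib)
  also have "\<dots> = r powr s - l * u powr s - (1 - l)"
  proof -
    have "(1/2 + s) * (r - l * u) = (1/2 + s) * (1 - l)" using e by simp
    moreover have "(1/2 - s) * (1 - l) + (1/2 + s) * (1 - l) = 1 - l" by (simp add: algebra_simps)
    ultimately show ?thesis by linarith
  qed
  finally have "phi r s \<ge> l * phi u s" using H' by linarith
  moreover have "l * phi u s \<ge> 0" using l p by simp
  ultimately show ?thesis by linarith
qed

lemma psi_phi:
  fixes u :: real
  assumes u: "0 < u" "u < 1"
  defines "c \<equiv> (1 - u) / (- ln u)"
  defines "sc \<equiv> ln c / ln u"
  shows "0 < sc" "sc < 1" "\<And>s. phi u s \<ge> c + (1 - u) * sc - (1 + u) / 2"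
    "phi u sc = c + (1 - u) * sc - (1 + u) / 2"
    "psi u = (c + (1 - u) * sc - (1 + u) / 2) * ln u / (1 - u)"
proof -
  define l where "l = ln u"
  have l0: "l < 0" using u by (simp add: l_def)
  have ul: "u = exp l" using u by (simp add: l_def)
  have c0: "0 < c" using u l0 by (simp add: c_def l_def divide_pos_neg)
  have lt: "1 + l < exp l" using l0 by (intro exp_gt_lin) simp
  have c1: "c < 1" using lt ul l0 by (simp add: c_def l_def[symmetric] field_simps)
  have cu: "u < c"
  proof -
    have "1 + (-l) < exp (-l)" using l0 by (intro exp_gt_lin) simp
    hence "u * (1 - l) < u * exp (-l)" using u by (intro mult_strict_left_mono) auto
    also have "u * exp (-l) = 1" using ul by (simp add: exp_minus)
    finally have "u - u * l < 1" by (simp add: algebra_simps)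
    thus ?thesis using l0 by (simp add: c_def l_def[symmetric] field_simps)
  qed
  have lc0: "ln c < 0" using c0 c1 by simp
  have lcl: "l < ln c" using cu u c0 by (simp add: l_def)
  show "0 < sc" using lc0 l0 by (simp add: sc_def l_def[symmetric] divide_neg_neg)
  show "sc < 1" using lcl l0 by (simp add: sc_def l_def[symmetric] field_simps)
  have esc: "exp (sc * l) = c" using l0 c0 by (simp add: sc_def l_def[symmetric])
  have cl: "c * l = -(1 - u)" using l0 by (simp add: c_def l_def[symmetric])
  have key: "u powr s \<ge> c - (1 - u) * (s - sc)" for s
  proof -
    have "u powr s = exp (sc * l) * exp ((s - sc) * l)"
      using u by (simp add: powr_def l_def[symmetric] flip: exp_add) (simp add: algebra_simps)
    also have "\<dots> \<ge> exp (sc * l) * (1 + (s - sc) * l)"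
      by (intro mult_left_mono) auto
    also have "exp (sc * l) * (1 + (s - sc) * l) = c + (c * l) * (s - sc)"
      using esc by (simp add: algebra_simps)
    also have "c + (c * l) * (s - sc) = c + (-(1 - u)) * (s - sc)" using cl by simp
    also have "\<dots> = c - (1 - u) * (s - sc)" by (simp only: mult_minus_left)
    finally show ?thesis .
  qed
  show "\<And>s. phi u s \<ge> c + (1 - u) * sc - (1 + u) / 2"
    unfolding phi_def using key by (simp add: algebra_simps add_divide_distrib)
  have "u powr sc = c" using u esc by (simp add: powr_def l_def[symmetric] mult.commute)
  thus "phi u sc = c + (1 - u) * sc - (1 + u) / 2"
    unfolding phi_def by (simp add: algebra_simps)
  define D where "D = 1 - u"
  have D0: "D \<noteq> 0" using u by (simp add: D_def)
  have clD: "c * l = - D" using cl by (simp add: D_def)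
  have scl: "sc * l = ln c" using l0 by (simp add: sc_def l_def[symmetric])
  have "(c + D * sc - (1 + u) / 2) * l / D = c * l / D + sc * l - (1 + u) * l / (2 * D)"
    using D0 by (simp add: field_simps)
  also have "\<dots> = -1 + ln c - (1/2) * ((1 + u) * l / D)"
    using D0 clD scl by (simp add: field_simps)
  finally show "psi u = (c + (1 - u) * sc - (1 + u) / 2) * ln u / (1 - u)"
    by (simp add: psi_def c_def l_def D_def)
qed


lemma psi_nonpos_phi:
  assumes u: "0 < u" "u < 1" and p: "psi u \<le> 0"
  shows "0 \<le> phi u s"
proof -
  define c where "c = (1 - u) / (- ln u)"
  define sc where "sc = ln c / ln u"
  define F where "F = c + (1 - u) * sc - (1 + u) / 2"
  have h: "phi u s \<ge> F" "psi u = F * ln u / (1 - u)"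
    using psi_phi[OF u] by (simp_all add: F_def c_def sc_def)
  have l0: "ln u < 0" using u by simp
  have "F = psi u * (1 - u) / ln u" using h(2) l0 u by (simp add: field_simps)
  also have "\<dots> \<ge> 0" using p l0 u by (intro divide_nonpos_neg) (auto simp: mult_nonpos_nonneg)
  finally show ?thesis using h(1) by linarith
qed

lemma phi_neg_psi_pos:
  assumes u: "0 < u" "u < 1" and p: "phi u s < 0"
  shows "0 < psi u"
proof -
  define c where "c = (1 - u) / (- ln u)"
  define sc where "sc = ln c / ln u"
  define F where "F = c + (1 - u) * sc - (1 + u) / 2"
  have h: "phi u s \<ge> F" "psi u = F * ln u / (1 - u)"
    using psi_phi[OF u] by (simp_all add: F_def c_def sc_def)
  have l0: "ln u < 0" using u by simp
  have "F < 0" using h(1) p by linarith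
  hence "0 < F * ln u" using l0 by (simp add: mult_neg_neg)
  thus ?thesis using h(2) u by simp
qed

lemma psi_uniq:
  assumes u: "0 < u1" "u1 < u2" "u2 < 1" and p: "psi u1 = 0" "psi u2 = 0"
  shows False
proof -
  have u2: "0 < u2" "u2 < 1" using u by auto
  define c where "c = (1 - u2) / (- ln u2)"
  define sc where "sc = ln c / ln u2"
  define F where "F = c + (1 - u2) * sc - (1 + u2) / 2"
  have h: "0 < sc" "sc < 1" "phi u2 sc = F" "psi u2 = F * ln u2 / (1 - u2)"
    using psi_phi[OF u2] by (simp_all add: F_def c_def sc_def)
  have l0: "ln u2 < 0" using u2 by simp
  have F0: "F = 0" using h(4) p(2) l0 u2 by simp
  have p1: "0 \<le> phi u1 sc" using psi_nonpos_phi[of u1 sc] u p by simp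
  define l where "l = (1 - u2) / (1 - u1)"
  have l: "0 < l" "l < 1" using u by (auto simp: l_def field_simps)
  have l1u: "l * (1 - u1) = 1 - u2" using u by (simp add: l_def)
  have rr: "l * u1 + (1 - l) * 1 = u2"
  proof -
    have "l * u1 + (1 - l) * 1 = 1 - l * (1 - u1)" by (simp add: algebra_simps)
    thus ?thesis using l1u by simp
  qed
  have H: "l * u1 powr sc + (1 - l) * 1 powr sc < (l * u1 + (1 - l) * 1) powr sc"
    using conc_comb_strict[OF l u(1) _ _ h(1,2), of 1] u by simp
  hence H': "l * u1 powr sc + (1 - l) < u2 powr sc" using rr by simp
  have e: "u2 - l * u1 = 1 - l" using rr by simp
  have "phi u2 sc - l * phi u1 sc = u2 powr sc - l * u1 powr sc - (1/2 - sc) * (1 - l) - (1/2 + sc) * (u2 - l * u1)"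
    unfolding phi_def by (simp add: algebra_simps diff_divide_distrib add_divide_distrib)
  also have "\<dots> = u2 powr sc - l * u1 powr sc - (1 - l)"
  proof -
    have "(1/2 + sc) * (u2 - l * u1) = (1/2 + sc) * (1 - l)" using e by simp
    moreover have "(1/2 - sc) * (1 - l) + (1/2 + sc) * (1 - l) = 1 - l" by (simp add: algebra_simps)
    ultimately show ?thesis by linarith
  qed
  finally have "phi u2 sc > l * phi u1 sc" using H' by linarith
  moreover have "l * phi u1 sc \<ge> 0" using l p1 by simp
  ultimately show False using h(3) F0 by linarith
qed

lemma exp_lower_taylor:
  fixes x :: real
  assumes "0 \<le> x \<or> even n"
  shows "(\<Sum>m<n. x^m / fact m) \<le> exp x"
proof -
  obtain t where "exp x = (\<Sum>m<n. (x ^ m) / fact m) + (exp t / fact n) * x ^ n"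
    using Maclaurin_exp_le by blast
  moreover have "0 \<le> (exp t / fact n) * x ^ n"
    using assms by (auto intro!: mult_nonneg_nonneg simp: zero_le_even_power)
  ultimately show ?thesis by linarith
qed

lemma exp_upper_taylor:
  fixes x :: real
  assumes "even n" and pos: "0 < (\<Sum>m<n. (-x)^m / fact m)"
  shows "exp x \<le> 1 / (\<Sum>m<n. (-x)^m / fact m)"
proof -
  have "(\<Sum>m<n. (-x)^m / fact m) \<le> exp (-x)" using exp_lower_taylor assms by blast
  hence "1 / exp (-x) \<le> 1 / (\<Sum>m<n. (-x)^m / fact m)" using pos by (intro divide_left_mono) auto
  thus ?thesis by (simp add: exp_minus inverse_eq_divide)
qed

lemma ln197_upper: "ln 197 \<le> (52834 / 10000 :: real)"
proof -
  define T where "T = (\<Sum>m<14. (132085/100000::real)^m / fact m)"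
  have T1: "T \<le> exp (132085/100000)" unfolding T_def by (rule exp_lower_taylor) simp
  have T0: "0 \<le> T" unfolding T_def by (intro sum_nonneg) simp
  have "(197::real) \<le> T ^ 4" unfolding T_def by (simp add: eval_nat_numeral fact_numeral lessThan_Suc)
  also have "\<dots> \<le> exp (132085/100000) ^ 4" using T0 T1 by (intro power_mono) auto
  also have "\<dots> = exp (52834 / 10000)" using exp_of_nat_mult[of 4 "132085/100000::real"] by simp
  finally have "exp (ln 197) \<le> exp (52834 / 10000 :: real)" by simp
  thus ?thesis by (simp only: exp_le_cancel_iff)
qed

lemma ln197_lower: "(5283 / 1000 :: real) \<le> ln 197"
proof -
  define T where "T = (\<Sum>m<16. (- (132075/100000::real))^m / fact m)"
  have T0: "0 < T" unfolding T_def by (simp add: eval_nat_numeral fact_numeral lessThan_Suc)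
  have T1: "exp (132075/100000) \<le> 1 / T" unfolding T_def
    by (rule exp_upper_taylor) (use T0 in \<open>simp_all add: T_def\<close>)
  have "exp (5283 / 1000 :: real) = exp (132075/100000) ^ 4" using exp_of_nat_mult[of 4 "132075/100000::real"] by simp
  also have "\<dots> \<le> (1 / T) ^ 4" using T1 by (intro power_mono) auto
  also have "\<dots> \<le> 197" unfolding T_def by (simp add: eval_nat_numeral fact_numeral lessThan_Suc)
  finally have "exp (5283 / 1000 :: real) \<le> exp (ln 197)" by simp
  thus ?thesis by (simp only: exp_le_cancel_iff)
qed

lemma ln5283_lower: "(16644 / 10000 :: real) \<le> ln (5283 / 1000)"
proof -
  define T where "T = (\<Sum>m<16. (- (16644/10000::real))^m / fact m)"
  have T0: "0 < T" unfolding T_def by (simp add: eval_nat_numeral fact_numeral lessThan_Suc)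
  have T1: "exp (16644/10000) \<le> 1 / T" unfolding T_def
    by (rule exp_upper_taylor) (use T0 in \<open>simp_all add: T_def\<close>)
  also have "\<dots> \<le> 5283 / 1000" unfolding T_def by (simp add: eval_nat_numeral fact_numeral lessThan_Suc)
  finally have "exp (16644 / 10000 :: real) \<le> exp (ln (5283 / 1000))" by simp
  thus ?thesis by (simp only: exp_le_cancel_iff)
qed


lemma psi_197: "psi (1/197) < 0"
proof -
  define L where "L = ln (197::real)"
  have L1: "5283/1000 \<le> L" "L \<le> 52834/10000" using ln197_lower ln197_upper by (simp_all add: L_def)
  have L0: "0 < L" using L1 by simp
  have e1: "ln (1/197::real) = - L" by (simp add: ln_div L_def)
  have "psi (1/197) = ln ((196/197) / L) - 1 - (1/2) * ((198/197) * (- L) / (196/197))"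
    by (simp add: psi_def e1)
  also have "ln ((196/197) / L) = ln (196/197) - ln L" by (intro ln_divide_pos) (use L0 in auto)
  also have "(1/2) * ((198/197) * (- L) / (196/197)) = - (99/196) * L" by simp
  finally have eq: "psi (1/197) = ln (196/197) - ln L - 1 + (99/196) * L" by simp
  have a: "ln (196/197::real) \<le> 196/197 - 1" by (rule ln_le_minus_one) simp
  have b: "16644/10000 \<le> ln L"
  proof -
    have "ln (5283/1000) \<le> ln L" using L1 by (subst ln_le_cancel_iff) auto
    thus ?thesis using ln5283_lower by linarith
  qed
  show ?thesis unfolding eq using a b L1 by linarith
qed

lemma psi_256: "0 < psi (1/256)"
proof (rule phi_neg_psi_pos[of _ "1/4"])
  have "(1/4::real) powr 4 = 1/256" by (subst powr_numeral) (auto simp: eval_nat_numeral)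
  hence "(1/256::real) powr (1/4) = ((1/4) powr 4) powr (1/4)" by (simp only:)
  also have "\<dots> = 1/4" by (simp only: powr_powr) simp
  finally show "phi (1/256) (1/4) < 0" by (simp add: phi_def)
qed auto

lemma psi_cont: "continuous_on {1/256..1/197} psi"
  unfolding psi_def by (intro continuous_intros) auto

lemma psi_ex1: "\<exists>!u. 0 < u \<and> u < 1 \<and> psi u = 0"
proof -
  obtain x where x: "1/256 \<le> x" "x \<le> 1/197" "psi x = 0"
    using IVT2'[of psi "1/197" 0 "1/256"] psi_197 psi_256 psi_cont by force
  show ?thesis
  proof (rule ex1I[of _ x])
    show "0 < x \<and> x < 1 \<and> psi x = 0" using x by simp
  next
    fix y assume y: "0 < y \<and> y < 1 \<and> psi y = 0"
    show "y = x"
    proof (rule ccontr)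
      assume "y \<noteq> x"
      hence "y < x \<or> x < y" by auto
      thus False using psi_uniq[of y x] psi_uniq[of x y] x y by auto
    qed
  qed
qed

lemma u_star_eq: "u_star = (THE u. 0 < u \<and> u < 1 \<and> psi u = 0)"
  by (simp add: u_star_def psi_def)

lemma u_star_props: "0 < u_star" "u_star < 1" "psi u_star = 0"
  using theI'[OF psi_ex1] unfolding u_star_eq[symmetric] by auto


definition pp :: "nat \<Rightarrow> int \<Rightarrow> real" where
  "pp n k = (if k < 0 then 0 else real (n choose nat k))"

definition SS :: "nat \<Rightarrow> int \<Rightarrow> real" where
  "SS n m = (\<Sum>k\<in>{m..int n}. pp n k)"

lemma pp_nonneg: "0 \<le> pp n k" by (simp add: pp_def)

lemma pp_big: "k > int n \<Longrightarrow> pp n k = 0"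
  by (simp add: pp_def)

lemma SS_nonneg: "0 \<le> SS n m" unfolding SS_def by (intro sum_nonneg) (simp add: pp_nonneg)

lemma SS_step: "SS n m = pp n m + SS n (m + 1)"
proof (cases "m \<le> int n")
  case True
  have "{m..int n} = insert m {m+1..int n}" using True by auto
  thus ?thesis unfolding SS_def by simp
next
  case False thus ?thesis by (simp add: SS_def pp_big)
qed

lemma SS_zero: "m > int n \<Longrightarrow> SS n m = 0" by (simp add: SS_def)

lemma SS_mono: "SS n (m + 1) \<le> SS n m"
  using SS_step[of n m] pp_nonneg[of n m] by linarith

lemma SS_antimono: "m \<le> m' \<Longrightarrow> SS n m' \<le> SS n m"
proof (induction m' rule: int_ge_induct)
  case base then show ?case by simp
next
  case (step i) then show ?case using SS_mono[of n i] by linarith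
qed

lemma SS_pos: "m \<le> int n \<Longrightarrow> 1 \<le> SS n m"
proof -
  assume m: "m \<le> int n"
  have "pp n (int n) \<le> SS n m" unfolding SS_def
    by (rule member_le_sum) (use m in \<open>auto simp: pp_nonneg\<close>)
  thus ?thesis by (simp add: pp_def)
qed

lemma SS_top: "m \<le> 0 \<Longrightarrow> SS n m = 2 ^ n"
proof -
  assume m: "m \<le> 0"
  have "SS n m = (\<Sum>k\<in>{0..int n}. pp n k)" unfolding SS_def
    by (rule sum.mono_neutral_right) (use m in \<open>auto simp: pp_def\<close>)
  also have "\<dots> = (\<Sum>i\<in>{0..n}. pp n (int i))"
  proof -
    have "{0..int n} = int ` {0..n}" by (auto simp: image_iff intro!: bexI[of _ "nat _"])
    thus ?thesis by (simp add: sum.reindex)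
  qed
  also have "\<dots> = (\<Sum>i\<le>n. real (n choose i))" by (simp add: pp_def atMost_atLeast0)
  also have "\<dots> = 2 ^ n" using choose_row_sum[of n] by (metis of_nat_numeral of_nat_power of_nat_sum)
  finally show ?thesis .
qed

lemma binom_ratio_nat:
  assumes "a \<le> b"
  shows "(n choose a) * (n choose Suc b) \<le> (n choose Suc a) * (n choose b)"
proof -
  have ea: "Suc a * (n choose Suc a) = (n - a) * (n choose a)"
    using binomial_absorption[of a n] binomial_absorb_comp[of n a] by simp
  have eb: "Suc b * (n choose Suc b) = (n - b) * (n choose b)"
    using binomial_absorption[of b n] binomial_absorb_comp[of n b] by simp
  have h: "(n - b) * Suc a \<le> (n - a) * Suc b"
  proof -
    have "n - b \<le> n - a" using assms by simp
    moreover have "Suc a \<le> Suc b" using assms by simp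
    ultimately show ?thesis by (rule mult_le_mono)
  qed
  define X where "X = n choose a"
  define Y where "Y = n choose b"
  have "Suc a * Suc b * (X * (n choose Suc b)) = X * (Suc b * (n choose Suc b)) * Suc a"
    by (simp only: mult_ac)
  also have "\<dots> = X * Y * ((n - b) * Suc a)" unfolding eb Y_def by (simp only: mult_ac)
  also have "\<dots> \<le> X * Y * ((n - a) * Suc b)"
    using h by (rule mult_le_mono2)
  also have "\<dots> = (Suc a * (n choose Suc a)) * Y * Suc b" unfolding ea X_def by (simp only: mult_ac)
  also have "\<dots> = Suc a * Suc b * ((n choose Suc a) * Y)" by (simp only: mult_ac)
  finally have "Suc a * Suc b * (X * (n choose Suc b)) \<le> Suc a * Suc b * ((n choose Suc a) * Y)" .
  hence "X * (n choose Suc b) \<le> (n choose Suc a) * Y"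
    by (subst (asm) mult_le_cancel1) simp
  thus ?thesis by (simp add: X_def Y_def)
qed

lemma pp_ratio:
  assumes "m \<le> k"
  shows "pp n m * pp n (k + 1) \<le> pp n (m + 1) * pp n k"
proof (cases "m < 0")
  case True thus ?thesis by (simp add: pp_def)
next
  case False
  hence m0: "0 \<le> m" by simp
  have k0: "0 \<le> k" using assms m0 by simp
  have "real ((n choose nat m) * (n choose Suc (nat k))) \<le> real ((n choose Suc (nat m)) * (n choose nat k))"
    using binom_ratio_nat[of "nat m" "nat k" n] assms by (simp only: of_nat_le_iff)
  moreover have "nat (k + 1) = Suc (nat k)" "nat (m + 1) = Suc (nat m)" using m0 k0 by auto
  ultimately show ?thesis using m0 k0 by (simp add: pp_def)
qed

lemma SS_aux:
  assumes "m + 1 \<le> k"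
  shows "pp n m * SS n (k + 1) \<le> pp n (m + 1) * SS n k"
proof (cases "k \<le> int n + 1")
  case False
  thus ?thesis by (simp add: SS_zero mult_nonneg_nonneg pp_nonneg SS_nonneg)
next
  case True
  have "m + 1 \<le> k \<longrightarrow> pp n m * SS n (k + 1) \<le> pp n (m + 1) * SS n k"
    using True
  proof (induction k rule: int_le_induct)
    case base
    show ?case by (simp add: SS_zero mult_nonneg_nonneg pp_nonneg SS_nonneg)
  next
    case (step i)
    show ?case
    proof
      assume mi: "m + 1 \<le> i - 1"
      have IH: "pp n m * SS n (i + 1) \<le> pp n (m + 1) * SS n i" using step.IH mi by simp
      have "pp n m * SS n (i - 1 + 1) = pp n m * pp n i + pp n m * SS n (i + 1)"
        using SS_step[of n i] by (simp add: distrib_left)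
      also have "\<dots> \<le> pp n (m + 1) * pp n (i - 1) + pp n (m + 1) * SS n i"
        using pp_ratio[of m "i - 1" n] mi IH by (intro add_mono) auto
      also have "\<dots> = pp n (m + 1) * SS n (i - 1)"
        using SS_step[of n "i - 1"] by (simp add: distrib_left)
      finally show "pp n m * SS n (i - 1 + 1) \<le> pp n (m + 1) * SS n (i - 1)" .
    qed
  qed
  thus ?thesis using assms by simp
qed

lemma SS_logconc: "SS n m * SS n (m + 2) \<le> SS n (m + 1) ^ 2"
proof -
  have a: "pp n m * SS n (m + 1 + 1) \<le> pp n (m + 1) * SS n (m + 1)" by (rule SS_aux) simp
  have "SS n m * SS n (m + 2) = pp n m * SS n (m + 1 + 1) + SS n (m + 1) * SS n (m + 2)"
    using SS_step[of n m] by (simp add: algebra_simps)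
  also have "\<dots> \<le> pp n (m + 1) * SS n (m + 1) + SS n (m + 1) * SS n (m + 2)" using a by simp
  also have "\<dots> = SS n (m + 1) ^ 2"
    using SS_step[of n "m + 1"] by (simp add: algebra_simps power2_eq_square)
  finally show ?thesis .
qed

lemma SS_ratio:
  assumes j: "0 \<le> j" "j < int n"
  shows "real_of_int (int n - j) * SS n j \<le> real (n + 1) * SS n (j + 1)"
proof -
  have ea: "Suc (nat j) * (n choose Suc (nat j)) = (n - nat j) * (n choose nat j)"
    using binomial_absorption[of "nat j" n] binomial_absorb_comp[of n "nat j"] by simp
  have ea': "real (Suc (nat j)) * real (n choose Suc (nat j)) = real (n - nat j) * real (n choose nat j)"
    using ea by (metis of_nat_mult)
  have nj: "real (n - nat j) = real_of_int (int n - j)" using j by simp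
  have sj: "real (Suc (nat j)) = real_of_int (j + 1)" using j by simp
  have pj: "real_of_int (int n - j) * pp n j = real_of_int (j + 1) * pp n (j + 1)"
    using ea' nj sj j by (auto simp: pp_def nat_add_distrib algebra_simps)
  have s1: "pp n (j + 1) \<le> SS n (j + 1)"
  proof -
    have "SS n (j+1) = pp n (j+1) + SS n (j+1+1)" by (rule SS_step)
    moreover have "0 \<le> SS n (j+1+1)" by (rule SS_nonneg)
    ultimately show ?thesis by linarith
  qed
  have "real_of_int (int n - j) * SS n j = real_of_int (int n - j) * pp n j + real_of_int (int n - j) * SS n (j + 1)"
    using SS_step[of n j] by (simp add: distrib_left)
  also have "\<dots> = real_of_int (j + 1) * pp n (j + 1) + real_of_int (int n - j) * SS n (j + 1)"
    using pj by simp
  also have "\<dots> \<le> real_of_int (j + 1) * SS n (j + 1) + real_of_int (int n - j) * SS n (j + 1)"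
    using s1 j by (intro add_mono mult_left_mono) auto
  also have "\<dots> = real (n + 1) * SS n (j + 1)" by (simp add: algebra_simps)
  finally show ?thesis .
qed

lemma SS_down:
  assumes j: "j + 1 \<le> int n" and m: "m \<le> j"
  shows "SS n m * SS n (j + 1) \<le> SS n (m + 1) * SS n j"
  using m
proof (induction m rule: int_le_induct)
  case base then show ?case by (simp add: mult.commute)
next
  case (step m)
  have pos: "0 < SS n (m + 1)" using SS_pos[of "m + 1" n] step j by simp
  have e1: "m - 1 + 2 = m + 1" "m - 1 + 1 = m" by simp_all
  have lc: "SS n (m - 1) * SS n (m + 1) \<le> SS n m ^ 2" using SS_logconc[of n "m - 1"] by (simp only: e1)
  have "SS n (m + 1) * (SS n (m - 1) * SS n (j + 1)) = (SS n (m - 1) * SS n (m + 1)) * SS n (j + 1)"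
    by (simp only: mult_ac)
  also have "\<dots> \<le> SS n m ^ 2 * SS n (j + 1)" using lc SS_nonneg by (intro mult_right_mono) auto
  also have "\<dots> = SS n m * (SS n m * SS n (j + 1))" by (simp add: power2_eq_square)
  also have "\<dots> \<le> SS n m * (SS n (m + 1) * SS n j)" using step.IH SS_nonneg by (intro mult_left_mono) auto
  also have "\<dots> = SS n (m + 1) * (SS n (m - 1 + 1) * SS n j)" by simp
  finally show ?case using pos by (simp only: mult_le_cancel_left_pos)
qed

lemma SS_up:
  assumes m: "j \<le> m"
  shows "SS n (m + 1) * SS n j \<le> SS n m * SS n (j + 1)"
  using m
proof (induction m rule: int_ge_induct)
  case base then show ?case by (simp add: mult.commute)
next
  case (step m)
  show ?case
  proof (cases "m \<le> int n")
    case False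
    thus ?thesis by (simp add: SS_zero SS_nonneg)
  next
    case True
    have pos: "0 < SS n m" using SS_pos[of m n] True by simp
    have lc: "SS n m * SS n (m + 2) \<le> SS n (m + 1) ^ 2" using SS_logconc[of n m] by simp
    have e2: "m + 1 + 1 = m + 2" by simp
    have "SS n m * (SS n (m + 1 + 1) * SS n j) = (SS n m * SS n (m + 2)) * SS n j"
      by (simp only: e2 mult_ac)
    also have "\<dots> \<le> SS n (m + 1) ^ 2 * SS n j" using lc SS_nonneg by (intro mult_right_mono) auto
    also have "\<dots> = SS n (m + 1) * (SS n (m + 1) * SS n j)" by (simp add: power2_eq_square)
    also have "\<dots> \<le> SS n (m + 1) * (SS n m * SS n (j + 1))" using step.IH SS_nonneg by (intro mult_left_mono) auto
    also have "\<dots> = SS n m * (SS n (m + 1) * SS n (j + 1))" by (simp only: mult_ac)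
    finally show ?thesis using pos by (simp only: mult_le_cancel_left_pos)
  qed
qed

lemma SS_chord:
  assumes j: "0 \<le> j" "j + 1 \<le> int n"
  defines "r \<equiv> SS n (j + 1) / SS n j"
  shows "SS n m \<le> SS n j * r powr (real_of_int (m - j))"
proof -
  have pj: "0 < SS n j" "0 < SS n (j + 1)" using SS_pos[of j n] SS_pos[of "j+1" n] j by auto
  have r0: "0 < r" using pj by (simp add: r_def)
  show ?thesis
  proof (cases "j \<le> m")
    case True
    thus ?thesis
    proof (induction m rule: int_ge_induct)
      case base then show ?case using r0 by simp
    next
      case (step m)
      have "SS n (m + 1) * SS n j \<le> SS n m * SS n (j + 1)" using SS_up step by simp
      hence "SS n (m + 1) \<le> r * SS n m" using pj by (simp add: r_def field_simps)
      also have "\<dots> \<le> r * (SS n j * r powr (real_of_int (m - j)))" using step.IH r0 by (intro mult_left_mono) auto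
      also have "\<dots> = SS n j * r powr (real_of_int (m + 1 - j))"
      proof -
        have "real_of_int (m + 1 - j) = real_of_int (m - j) + 1" by simp
        hence "r powr real_of_int (m + 1 - j) = r powr (real_of_int (m - j)) * r powr 1" by (simp only: powr_add)
        thus ?thesis using r0 by (simp add: mult_ac)
      qed
      finally show ?case .
    qed
  next
    case False
    hence mj: "m \<le> j" by simp
    thus ?thesis
    proof (induction m rule: int_le_induct)
      case base then show ?case using r0 by simp
    next
      case (step m)
      have "SS n (m - 1) * SS n (j + 1) \<le> SS n (m - 1 + 1) * SS n j" using SS_down[of j n "m - 1"] step j by simp
      hence "(SS n (m - 1) * SS n (j + 1)) / SS n j \<le> (SS n m * SS n j) / SS n j"
        using pj by (intro divide_right_mono) auto
      moreover have "r * SS n (m - 1) = (SS n (m - 1) * SS n (j + 1)) / SS n j" by (simp add: r_def)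
      ultimately have "r * SS n (m - 1) \<le> SS n m" using pj by simp
      hence "SS n (m - 1) \<le> SS n m / r" using r0 by (simp add: field_simps)
      also have "\<dots> \<le> (SS n j * r powr (real_of_int (m - j))) / r" using step.IH r0 by (intro divide_right_mono) auto
      also have "\<dots> = SS n j * r powr (real_of_int (m - 1 - j))"
      proof -
        have "real_of_int (m - 1 - j) = real_of_int (m - j) - 1" by simp
        hence "r powr real_of_int (m - 1 - j) = r powr (real_of_int (m - j)) / r powr 1" by (simp only: powr_diff)
        thus ?thesis using r0 by simp
      qed
      finally show ?case .
    qed
  qed
qed


lemma sum_pm1: "(\<Sum>i<n. (if h i then 1 else -1 :: int)) = 2 * int (card {i\<in>{..<n}. h i}) - int n"
proof (induction n)
  case 0 then show ?case by simp
next
  case (Suc n)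
  have "{i\<in>{..<Suc n}. h i} = (if h n then insert n {i\<in>{..<n}. h i} else {i\<in>{..<n}. h i})"
    by (auto simp: less_Suc_eq)
  moreover have "n \<notin> {i\<in>{..<n}. h i}" by simp
  ultimately show ?case using Suc by auto
qed

lemma rademacher_binomial:
  "rademacher_sum n = map_pmf (\<lambda>k. 2 * int k - int n) (binomial_pmf n (1/2))"
proof -
  define f :: "bool \<Rightarrow> int" where "f = (\<lambda>b. if b then 1 else -1)"
  define A where "A = {..<n}"
  define B where "B = bernoulli_pmf (1/2)"
  have fin: "finite A" by (simp add: A_def)
  have pm: "pmf_of_set {-1, 1::int} = map_pmf f B"
  proof -
    have "map_pmf f B = map_pmf f (pmf_of_set UNIV)" by (simp add: B_def bernoulli_pmf_half_conv_pmf_of_set)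
    also have "\<dots> = pmf_of_set (f ` UNIV)"
      by (rule map_pmf_of_set_inj) (auto simp: f_def inj_on_def)
    also have "f ` UNIV = {-1, 1}" by (auto simp: f_def image_iff UNIV_bool)
    finally show ?thesis by simp
  qed
  have "Pi_pmf A 0 (\<lambda>_. pmf_of_set {-1, 1::int}) = map_pmf (\<lambda>g x. if x \<in> A then g x else 0) (Pi_pmf A 1 (\<lambda>_. map_pmf f B))"
    unfolding pm by (rule Pi_pmf_default_swap[OF fin, symmetric])
  also have "Pi_pmf A 1 (\<lambda>_. map_pmf f B) = map_pmf (\<lambda>h. f \<circ> h) (Pi_pmf A True (\<lambda>_. B))"
    by (rule Pi_pmf_map) (auto simp: fin f_def)
  finally have e1: "Pi_pmf A 0 (\<lambda>_. pmf_of_set {-1, 1::int}) = map_pmf (\<lambda>g x. if x \<in> A then g x else 0) (map_pmf (\<lambda>h. f \<circ> h) (Pi_pmf A True (\<lambda>_. B)))" .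
  have "rademacher_sum n = map_pmf (\<lambda>eps. \<Sum>i<n. eps i) (Pi_pmf A 0 (\<lambda>_. pmf_of_set {-1, 1::int}))"
    by (simp add: rademacher_sum_def A_def)
  also have "\<dots> = map_pmf (\<lambda>h. \<Sum>i<n. f (h i)) (Pi_pmf A True (\<lambda>_. B))"
    unfolding e1 by (simp add: map_pmf_comp A_def)
  also have "\<dots> = map_pmf (\<lambda>h. 2 * int (card {i\<in>A. h i}) - int n) (Pi_pmf A True (\<lambda>_. B))"
    using sum_pm1 by (simp add: f_def A_def)
  also have "\<dots> = map_pmf (\<lambda>k. 2 * int k - int n) (map_pmf (\<lambda>h. card {i\<in>A. h i}) (Pi_pmf A True (\<lambda>_. B)))"
    by (simp add: map_pmf_comp)
  also have "map_pmf (\<lambda>h. card {i\<in>A. h i}) (Pi_pmf A True (\<lambda>_. B)) = binomial_pmf n (1/2)"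
    unfolding B_def by (rule binomial_pmf_altdef'[symmetric]) (auto simp: A_def)
  finally show ?thesis .
qed

lemma ceil_aux: "z \<le> real_of_int (2 * int k - int n) \<longleftrightarrow> ceiling ((z + real n) / 2) \<le> int k"
proof -
  have "ceiling ((z + real n) / 2) \<le> int k \<longleftrightarrow> (z + real n) / 2 \<le> real_of_int (int k)"
    by (rule ceiling_le_iff)
  also have "\<dots> \<longleftrightarrow> z \<le> real_of_int (2 * int k - int n)" by (simp add: field_simps)
  finally show ?thesis by simp
qed

lemma setK_aux:
  "(\<lambda>k::nat. 2 * int k - int n) -` {r. z \<le> real_of_int r} \<inter> set_pmf (binomial_pmf n (1/2))
     = {k. k \<le> n \<and> ceiling ((z + real n) / 2) \<le> int k}"
proof -
  have "set_pmf (binomial_pmf n (1/2)) = {..n}" by (rule set_pmf_binomial) auto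
  thus ?thesis using ceil_aux[of z _ n] by auto
qed

lemma tailR_binom:
  "tailR n z = measure (measure_pmf (binomial_pmf n (1/2))) ((\<lambda>k::nat. 2 * int k - int n) -` {r. z \<le> real_of_int r})"
  unfolding tailR_def rademacher_binomial by (rule measure_map_pmf)

lemma pmf_binom_half: "k \<le> n \<Longrightarrow> pmf (binomial_pmf n (1/2)) k = real (n choose k) / 2 ^ n"
proof -
  assume kn: "k \<le> n"
  have "(1/2::real) ^ k * (1 - 1/2) ^ (n - k) = (1/2) ^ (k + (n - k))" by (simp add: power_add)
  also have "\<dots> = 1 / 2 ^ n" using kn by (simp add: power_one_over)
  finally have e: "(1/2::real) ^ k * (1 - 1/2) ^ (n - k) = 1 / 2 ^ n" .
  have "pmf (binomial_pmf n (1/2)) k = real (n choose k) * ((1/2) ^ k * (1 - 1/2) ^ (n - k))"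
    by (subst pmf_binomial) (auto simp: mult.assoc)
  also have "\<dots> = real (n choose k) / 2 ^ n" unfolding e by simp
  finally show ?thesis .
qed

lemma SS_as_sum: "SS n m = (\<Sum>k\<in>{k. k \<le> n \<and> m \<le> int k}. real (n choose k))"
proof -
  have "SS n m = (\<Sum>k\<in>{m..int n} \<inter> {0..}. pp n k)" unfolding SS_def
    by (rule sum.mono_neutral_right) (auto simp: pp_def)
  also have "{m..int n} \<inter> {0..} = int ` {k. k \<le> n \<and> m \<le> int k}"
    apply (auto simp: image_iff)
    subgoal for x by (rule exI[of _ "nat x"]) auto
    done
  also have "(\<Sum>k\<in>int ` {k. k \<le> n \<and> m \<le> int k}. pp n k) = (\<Sum>k\<in>{k. k \<le> n \<and> m \<le> int k}. pp n (int k))"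
    by (simp add: sum.reindex)
  also have "\<dots> = (\<Sum>k\<in>{k. k \<le> n \<and> m \<le> int k}. real (n choose k))" by (simp add: pp_def)
  finally show ?thesis .
qed

lemma tailR_SS: "tailR n z = SS n (ceiling ((z + real n) / 2)) / 2 ^ n"
proof -
  define K where "K = {k. k \<le> n \<and> ceiling ((z + real n) / 2) \<le> int k}"
  have finK: "finite K" by (simp add: K_def)
  have "tailR n z = measure (measure_pmf (binomial_pmf n (1/2))) K"
    unfolding tailR_binom K_def setK_aux[symmetric] by (rule measure_Int_set_pmf[symmetric])
  also have "\<dots> = (\<Sum>k\<in>K. pmf (binomial_pmf n (1/2)) k)" by (rule measure_measure_pmf_finite[OF finK])
  also have "\<dots> = (\<Sum>k\<in>K. real (n choose k) / 2 ^ n)"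
    by (rule sum.cong[OF refl], rule pmf_binom_half) (simp add: K_def)
  also have "\<dots> = (\<Sum>k\<in>K. real (n choose k)) / 2 ^ n" by (simp add: sum_divide_distrib)
  also have "\<dots> = SS n (ceiling ((z + real n) / 2)) / 2 ^ n" by (simp add: SS_as_sum K_def)
  finally show ?thesis .
qed


definition Q :: "nat \<Rightarrow> int \<Rightarrow> real" where "Q n m = SS n m / 2 ^ n"

lemma Q_tail: "tailR n (real_of_int (2 * m - int n)) = Q n m"
proof -
  have "ceiling ((real_of_int (2 * m - int n) + real n) / 2) = m" by simp
  thus ?thesis by (simp add: tailR_SS Q_def)
qed

lemma Q_lat: "tailR n (real n + 2 * real_of_int k) = Q n (int n + k)"
proof -
  have "real n + 2 * real_of_int k = real_of_int (2 * (int n + k) - int n)" by simp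
  thus ?thesis by (simp only: Q_tail)
qed

lemma tail_low: "z \<le> - real n \<Longrightarrow> tailR n z = 1"
proof -
  assume z: "z \<le> - real n"
  have "ceiling ((z + real n) / 2) \<le> 0" using z by (simp add: ceiling_le_iff)
  thus ?thesis by (simp add: tailR_SS SS_top)
qed

lemma Q_nonneg: "0 \<le> Q n m" by (simp add: Q_def SS_nonneg)

lemma Q_le1: "Q n m \<le> 1"
proof -
  have "SS n m \<le> SS n (min m 0)" by (rule SS_antimono) simp
  also have "\<dots> = 2 ^ n" by (rule SS_top) simp
  finally show ?thesis by (simp add: Q_def)
qed

lemma Q_pos: "m \<le> int n \<Longrightarrow> 0 < Q n m"
  using SS_pos[of m n] by (simp add: Q_def)

lemma Q_mono: "Q n (m + 1) \<le> Q n m"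
  using SS_mono[of n m] by (simp add: Q_def divide_right_mono)

lemma Q_chord:
  assumes j: "0 \<le> j" "j + 1 \<le> int n"
  shows "Q n m \<le> Q n j * (Q n (j + 1) / Q n j) powr (real_of_int (m - j))"
proof -
  have "Q n (j + 1) / Q n j = SS n (j + 1) / SS n j" by (simp add: Q_def)
  thus ?thesis using SS_chord[OF j, of m] by (simp add: Q_def divide_right_mono)
qed

lemma lin_formula:
  fixes n :: nat and v :: real
  defines "k \<equiv> floor ((v - real n) / 2)"
  defines "\<gamma> \<equiv> (v - real n - 2 * real_of_int k) / 2"
  shows "tailR_lin n v = (1 - \<gamma>) * Q n (int n + k) + \<gamma> * Q n (int n + k + 1)"
proof -
  have "real n + 2 * real_of_int k + 2 = real n + 2 * real_of_int (k + 1)" by simp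
  hence "tailR n (real n + 2 * real_of_int k + 2) = Q n (int n + k + 1)"
    by (simp only: Q_lat add.assoc)
  thus ?thesis unfolding tailR_lin_def Let_def k_def[symmetric] \<gamma>_def[symmetric] Q_lat by simp
qed

lemma gamma_bounds:
  fixes n :: nat and v :: real
  defines "k \<equiv> floor ((v - real n) / 2)"
  defines "\<gamma> \<equiv> (v - real n - 2 * real_of_int k) / 2"
  shows "0 \<le> \<gamma>" "\<gamma> < 1"
proof -
  have h: "real_of_int k \<le> (v - real n) / 2" "(v - real n) / 2 < real_of_int k + 1"
    unfolding k_def by linarith+
  show "0 \<le> \<gamma>" using h by (simp add: \<gamma>_def)
  show "\<gamma> < 1" using h by (simp add: \<gamma>_def)
qed

lemma tailR_lin_le1: "tailR_lin n v \<le> 1"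
proof -
  define k where "k = floor ((v - real n) / 2)"
  define \<gamma> where "\<gamma> = (v - real n - 2 * real_of_int k) / 2"
  have g: "0 \<le> \<gamma>" "\<gamma> < 1" using gamma_bounds[of v n] by (simp_all add: k_def \<gamma>_def)
  have "(1 - \<gamma>) * Q n (int n + k) + \<gamma> * Q n (int n + k + 1) \<le> (1 - \<gamma>) * 1 + \<gamma> * 1"
    using g Q_le1 by (intro add_mono mult_left_mono) auto
  thus ?thesis using lin_formula[of n v] by (simp add: k_def \<gamma>_def)
qed

lemma key_ineq:
  assumes u: "0 < u" "u \<le> r" "r \<le> 1" and good: "\<forall>s. 0 \<le> s \<and> s \<le> 1/2 \<longrightarrow> 0 \<le> phi u s"
    and g: "0 \<le> \<gamma>" "\<gamma> \<le> 1"
  shows "(1 - \<gamma>) + \<gamma> * r \<le> r powr (\<gamma> - 1/2)"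
proof (cases "\<gamma> \<le> 1/2")
  case True
  have "(1 - \<gamma>) + \<gamma> * r \<le> (1 - \<gamma>) + \<gamma> * 1" using g u by (intro add_left_mono mult_left_mono) auto
  also have "\<dots> = 1" by simp
  also have "1 \<le> r powr (\<gamma> - 1/2)"
  proof -
    have "0 \<le> (\<gamma> - 1/2) * ln r" using True u by (intro mult_nonpos_nonpos) auto
    hence "1 \<le> exp ((\<gamma> - 1/2) * ln r)" by simp
    thus ?thesis using u by (simp add: powr_def)
  qed
  finally show ?thesis .
next
  case False
  define s where "s = \<gamma> - 1/2"
  have s: "0 \<le> s" "s \<le> 1" "s \<le> 1/2" using False g by (auto simp: s_def)
  have "0 \<le> phi r s" by (rule phi_mono[OF u s(1,2)]) (use good s in auto)
  thus ?thesis unfolding phi_def s_def by (simp add: algebra_simps)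
qed


lemma exp_powr': "exp (a::real) powr b = exp (a * b)"
  unfolding powr_def by (simp add: ac_simps)

lemma min_affine_concave:
  fixes a b :: "nat \<Rightarrow> real"
  assumes I: "finite I" "I \<noteq> {}" and t: "0 \<le> t" "t \<le> 1"
  shows "(1 - t) * Min ((\<lambda>i. a i + b i * x) ` I) + t * Min ((\<lambda>i. a i + b i * y) ` I)
           \<le> Min ((\<lambda>i. a i + b i * ((1 - t) * x + t * y)) ` I)"
proof (rule Min.boundedI)
  show "finite ((\<lambda>i. a i + b i * ((1 - t) * x + t * y)) ` I)" using I by simp
  show "(\<lambda>i. a i + b i * ((1 - t) * x + t * y)) ` I \<noteq> {}" using I by simp
  fix e assume "e \<in> (\<lambda>i. a i + b i * ((1 - t) * x + t * y)) ` I"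
  then obtain i where i: "i \<in> I" "e = a i + b i * ((1 - t) * x + t * y)" by auto
  have mx: "Min ((\<lambda>i. a i + b i * x) ` I) \<le> a i + b i * x" by (rule Min_le) (use I i in auto)
  have my: "Min ((\<lambda>i. a i + b i * y) ` I) \<le> a i + b i * y" by (rule Min_le) (use I i in auto)
  have "(1 - t) * Min ((\<lambda>i. a i + b i * x) ` I) + t * Min ((\<lambda>i. a i + b i * y) ` I)
          \<le> (1 - t) * (a i + b i * x) + t * (a i + b i * y)"
    using mx my t by (intro add_mono mult_left_mono) auto
  also have "\<dots> = e" using i by (simp add: algebra_simps)
  finally show "(1 - t) * Min ((\<lambda>i. a i + b i * x) ` I) + t * Min ((\<lambda>i. a i + b i * y) ` I) \<le> e" .
qed

lemma main_lemma:
  fixes n J :: nat and u z :: real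
  assumes J: "J \<le> n" and u: "0 < u"
    and good: "\<forall>s. 0 \<le> s \<and> s \<le> 1/2 \<longrightarrow> 0 \<le> phi u s"
    and rat: "\<forall>j. j < J \<longrightarrow> u * Q n (int j) \<le> Q n (int j + 1)"
    and z: "z \<le> 2 * real J - real n"
  shows "lc_majorant (tailR_lin n) (1 + z) \<le> lc_majorant (tailR n) z"
proof -
  define rr where "rr j = Q n (int j + 1) / Q n (int j)" for j :: nat
  define bb where "bb j = (if j < J then ln (rr j) / 2 else 0)" for j :: nat
  define aa where "aa j = (if j < J then ln (Q n (int j)) - bb j * (2 * real j - real n + 1) else 0)" for j :: nat
  define L where "L v = Min ((\<lambda>i. aa i + bb i * v) ` {..J})" for v :: real
  define g where "g v = exp (L v)" for v :: real
  have Qpos: "0 < Q n (int j)" "0 < Q n (int j + 1)" if "j < J" for j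
    using Q_pos[of "int j" n] Q_pos[of "int j + 1" n] that J by auto
  have rr_pos: "0 < rr j" if "j < J" for j using Qpos[OF that] by (simp add: rr_def)
  have rr_le1: "rr j \<le> 1" if "j < J" for j
    using Qpos[OF that] Q_mono[of n "int j"] by (simp add: rr_def)
  have rr_ge: "u \<le> rr j" if "j < J" for j
    using Qpos[OF that] rat that by (simp add: rr_def field_simps)
  have piece: "exp (aa j + bb j * v) = Q n (int j) * rr j powr ((v - (2 * real j - real n + 1)) / 2)"
    if j: "j < J" for j v
  proof -
    have "aa j + bb j * v = ln (Q n (int j)) + ln (rr j) * ((v - (2 * real j - real n + 1)) / 2)"
      using j by (simp add: aa_def bb_def field_simps)
    hence "exp (aa j + bb j * v) = exp (ln (Q n (int j))) * exp (ln (rr j) * ((v - (2 * real j - real n + 1)) / 2))"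
      by (simp add: exp_add)
    thus ?thesis using Qpos[OF j] rr_pos[OF j] by (simp add: powr_def mult.commute)
  qed
  have Lin_set: "L v \<in> (\<lambda>i. aa i + bb i * v) ` {..J}" for v
    unfolding L_def by (rule Min_in) auto
  have L_le: "L v \<le> aa i + bb i * v" if "i \<le> J" for i v
    unfolding L_def by (rule Min_le) (use that in auto)
  have L_le0: "L v \<le> 0" for v using L_le[of J v] by (simp add: aa_def bb_def)

  have lcg: "log_concave g"
    unfolding log_concave_def
  proof (intro conjI allI impI)
    fix x show "0 \<le> g x" by (simp add: g_def)
  next
    fix x y t :: real assume t: "0 < t \<and> t < 1"
    have "g x powr (1 - t) * g y powr t = exp ((1 - t) * L x + t * L y)"
      by (simp add: g_def exp_powr' exp_add[symmetric] algebra_simps)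
    also have "\<dots> \<le> exp (L ((1 - t) * x + t * y))"
      using min_affine_concave[of "{..J}" t aa bb x y] t by (simp add: L_def)
    finally show "g x powr (1 - t) * g y powr t \<le> g ((1 - t) * x + t * y)" by (simp add: g_def)
  qed

  have maj: "tailR_lin n v \<le> g v" for v
  proof -
    obtain i where i: "i \<le> J" "L v = aa i + bb i * v" using Lin_set[of v] by auto
    show ?thesis
    proof (cases "i < J")
      case False
      hence "L v = 0" using i by (simp add: aa_def bb_def)
      thus ?thesis using tailR_lin_le1[of n v] by (simp add: g_def)
    next
      case True
      define k where "k = floor ((v - real n) / 2)"
      define \<gamma> where "\<gamma> = (v - real n - 2 * real_of_int k) / 2"
      define M where "M = int n + k"
      define r where "r = rr i"
      have gam: "0 \<le> \<gamma>" "\<gamma> < 1" using gamma_bounds[of v n] by (simp_all add: k_def \<gamma>_def)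
      have r: "0 < r" "u \<le> r" "r \<le> 1" using rr_pos[OF True] rr_ge[OF True] rr_le1[OF True] by (simp_all add: r_def)
      have ij: "0 \<le> int i" "int i + 1 \<le> int n" using True J by auto
      have ch: "Q n m \<le> Q n (int i) * r powr (real_of_int (m - int i))" for m
        using Q_chord[OF ij, of m] by (simp add: r_def rr_def)
      define P where "P = Q n (int i) * r powr (real_of_int (M - int i))"
      have P0: "0 \<le> P" using Q_nonneg by (simp add: P_def)
      have c1: "Q n M \<le> P" using ch[of M] by (simp add: P_def)
      have c2: "Q n (M + 1) \<le> P * r"
      proof -
        have "real_of_int (M + 1 - int i) = real_of_int (M - int i) + 1" by simp
        hence "r powr real_of_int (M + 1 - int i) = r powr real_of_int (M - int i) * r powr 1"
          by (simp only: powr_add)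
        hence "r powr real_of_int (M + 1 - int i) = r powr real_of_int (M - int i) * r"
          using r by simp
        thus ?thesis using ch[of "M + 1"] by (simp add: P_def mult.assoc)
      qed
      have "tailR_lin n v = (1 - \<gamma>) * Q n M + \<gamma> * Q n (M + 1)"
        using lin_formula[of n v] by (simp add: k_def \<gamma>_def M_def)
      also have "\<dots> \<le> (1 - \<gamma>) * P + \<gamma> * (P * r)"
        using c1 c2 gam by (intro add_mono mult_left_mono) auto
      also have "\<dots> = P * ((1 - \<gamma>) + \<gamma> * r)" by (simp add: algebra_simps)
      also have "\<dots> \<le> P * r powr (\<gamma> - 1/2)"
        using key_ineq[OF u r(2,3) good, of \<gamma>] gam P0 by (intro mult_left_mono) auto
      also have "\<dots> = Q n (int i) * r powr (real_of_int (M - int i) + (\<gamma> - 1/2))"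
        using r by (simp add: P_def powr_add mult.assoc)
      also have "real_of_int (M - int i) + (\<gamma> - 1/2) = (v - (2 * real i - real n + 1)) / 2"
        by (simp add: M_def \<gamma>_def field_simps)
      also have "Q n (int i) * r powr ((v - (2 * real i - real n + 1)) / 2) = exp (aa i + bb i * v)"
        using piece[OF True, of v] by (simp add: r_def)
      also have "\<dots> = g v" using i by (simp add: g_def)
      finally show ?thesis .
    qed
  qed

  have below: "g (1 + z) \<le> G z" if G: "log_concave G" "\<forall>x. tailR n x \<le> G x" for G
  proof (cases "z \<le> - real n")
    case True
    have "g (1 + z) \<le> 1" using L_le0[of "1 + z"] by (simp add: g_def)
    also have "1 = tailR n z" using tail_low[OF True] by simp
    also have "\<dots> \<le> G z" using G by blast
    finally show ?thesis .
  next
    case False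
    define j' where "j' = ceiling ((z + real n) / 2) - 1"
    have j'0: "0 \<le> j'"
    proof -
      have "0 < (z + real n) / 2" using False by simp
      hence "0 < ceiling ((z + real n) / 2)" by simp
      thus ?thesis by (simp add: j'_def)
    qed
    define j where "j = nat j'"
    have jj: "int j = j'" using j'0 by (simp add: j_def)
    have jJ: "j < J"
    proof -
      have "(z + real n) / 2 \<le> real J" using z by simp
      hence "ceiling ((z + real n) / 2) \<le> int J" by (simp add: ceiling_le_iff)
      thus ?thesis using jj by (simp add: j'_def)
    qed
    define s where "s = (z - (2 * real j - real n)) / 2"
    have s: "0 < s" "s \<le> 1"
    proof -
      have c: "real_of_int j' < (z + real n) / 2" "(z + real n) / 2 \<le> real_of_int j' + 1"
        unfolding j'_def by linarith+
      show "0 < s" using c jj by (simp add: s_def field_simps)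
      show "s \<le> 1" using c jj by (simp add: s_def field_simps)
    qed
    define r where "r = rr j"
    have r0: "0 < r" using rr_pos[OF jJ] by (simp add: r_def)
    have Qj: "0 < Q n (int j)" "0 < Q n (int j + 1)" using Qpos[OF jJ] by auto
    have Qr: "Q n (int j + 1) = Q n (int j) * r" using Qj by (simp add: r_def rr_def)
    have "g (1 + z) \<le> exp (aa j + bb j * (1 + z))"
      using L_le[of j "1 + z"] jJ by (simp add: g_def)
    also have "\<dots> = Q n (int j) * r powr s"
    proof -
      have e: "(1 + z - (2 * real j - real n + 1)) / 2 = s" by (simp add: s_def field_simps)
      show ?thesis using piece[OF jJ, of "1 + z", unfolded e] by (simp add: r_def)
    qed
    also have "\<dots> \<le> G z"
    proof (cases "s = 1")
      case True
      have zz: "z = real_of_int (2 * (int j + 1) - int n)" using True by (simp add: s_def field_simps)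
      have "Q n (int j) * r powr s = Q n (int j + 1)" using True Qr r0 by simp
      also have "\<dots> = tailR n z" unfolding zz Q_tail ..
      also have "\<dots> \<le> G z" using G by blast
      finally show ?thesis .
    next
      case False
      hence s1: "s < 1" using s by simp
      define x0 where "x0 = real_of_int (2 * int j - int n)"
      define x1 where "x1 = real_of_int (2 * (int j + 1) - int n)"
      have x10: "x1 = x0 + 2" by (simp add: x0_def x1_def)
      have "(1 - s) * x0 + s * x1 = x0 + 2 * s" unfolding x10 by (simp add: algebra_simps)
      also have "x0 + 2 * s = z" by (simp add: x0_def s_def field_simps)
      finally have zc: "(1 - s) * x0 + s * x1 = z" .
      have G0: "Q n (int j) \<le> G x0" using G(2) Q_tail[of n "int j"] unfolding x0_def by metis
      have G1: "Q n (int j + 1) \<le> G x1" using G(2) Q_tail[of n "int j + 1"] unfolding x1_def by metis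
      have "Q n (int j) * r powr s = Q n (int j) powr (1 - s) * Q n (int j + 1) powr s"
      proof -
        have "Q n (int j) powr (1 - s) * Q n (int j + 1) powr s
               = Q n (int j) powr (1 - s) * (Q n (int j) powr s * r powr s)"
          unfolding Qr using Qj r0 by (simp add: powr_mult)
        also have "\<dots> = Q n (int j) powr ((1 - s) + s) * r powr s"
          by (simp only: powr_add mult.assoc)
        also have "\<dots> = Q n (int j) * r powr s" using Qj by simp
        finally show ?thesis by simp
      qed
      also have "\<dots> \<le> G x0 powr (1 - s) * G x1 powr s"
        using G0 G1 Qj s s1 by (intro mult_mono powr_mono2) auto
      also have "\<dots> \<le> G ((1 - s) * x0 + s * x1)"
        using G(1) s s1 unfolding log_concave_def by blast
      finally show ?thesis using zc by simp
    qed
    finally show ?thesis .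
  qed

  have "lc_majorant (tailR_lin n) (1 + z) \<le> g (1 + z)"
    unfolding lc_majorant_def
  proof (rule cInf_lower)
    show "g (1 + z) \<in> (\<lambda>g. g (1 + z)) ` {g. log_concave g \<and> (\<forall>x. tailR_lin n x \<le> g x)}"
      using lcg maj by blast
    show "bdd_below ((\<lambda>g. g (1 + z)) ` {g. log_concave g \<and> (\<forall>x. tailR_lin n x \<le> g x)})"
      by (rule bdd_belowI[of _ 0]) (auto simp: log_concave_def)
  qed
  also have "g (1 + z) \<le> lc_majorant (tailR n) z"
    unfolding lc_majorant_def
  proof (rule cInf_greatest)
    have "log_concave (\<lambda>_. 1)" by (simp add: log_concave_def)
    moreover have "\<forall>x. tailR n x \<le> 1" by (simp add: tailR_def)
    ultimately show "(\<lambda>g. g z) ` {g. log_concave g \<and> (\<forall>x. tailR n x \<le> g x)} \<noteq> {}" by blast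
  next
    fix w assume "w \<in> (\<lambda>g. g z) ` {g. log_concave g \<and> (\<forall>x. tailR n x \<le> g x)}"
    then obtain G where "log_concave G" "\<forall>x. tailR n x \<le> G x" "w = G z" by blast
    thus "g (1 + z) \<le> w" using below by blast
  qed
  finally show ?thesis .
qed


lemma u_star_le: "u_star \<le> 1/197"
proof -
  obtain x where x: "1/256 \<le> x" "x \<le> 1/197" "psi x = 0"
    using IVT2'[of psi "1/197" 0 "1/256"] psi_197 psi_256 psi_cont by force
  have "(THE u. 0 < u \<and> u < 1 \<and> psi u = 0) = x"
    by (rule the1_equality[OF psi_ex1]) (use x in simp)
  thus ?thesis using x u_star_eq by simp
qed

lemma Q_ratio:
  assumes "0 \<le> j" "j < int n"
  shows "real_of_int (int n - j) / real (n + 1) * Q n j \<le> Q n (j + 1)"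
proof -
  have "real_of_int (int n - j) * SS n j \<le> real (n + 1) * SS n (j + 1)" by (rule SS_ratio[OF assms])
  hence "real_of_int (int n - j) * SS n j / real (n + 1) \<le> SS n (j + 1)"
    by (simp add: field_simps)
  hence "(real_of_int (int n - j) * SS n j / real (n + 1)) / 2 ^ n \<le> SS n (j + 1) / 2 ^ n"
    by (rule divide_right_mono) simp
  moreover have "real_of_int (int n - j) / real (n + 1) * Q n j = (real_of_int (int n - j) * SS n j / real (n + 1)) / 2 ^ n"
    by (simp add: Q_def)
  ultimately show ?thesis by (simp add: Q_def)
qed

theorem corollary2p8:
  fixes n :: nat and b :: real
  assumes "n \<ge> 1" and "b > 0"
  shows "(\<forall>y::real. y * sqrt n / (2 * b) + real n / 2 \<le> real_of_int (j_star2 n) \<longrightarrow>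
            c3 * lc_majorant (tailR_lin n) (1 + y * sqrt n / b)
              \<le> c3 * lc_majorant (tailR n) (y * sqrt n / b))
       \<and> (n \<le> 196 \<longrightarrow>
           (\<forall>y::real. y * sqrt n / (2 * b) + real n / 2 \<le> real n \<longrightarrow>
            c3 * lc_majorant (tailR_lin n) (1 + y * sqrt n / b)
              \<le> c3 * lc_majorant (tailR n) (y * sqrt n / b)))"
proof -
  have c3: "0 \<le> c3" by (simp add: c3_def)
  have zc: "y * sqrt n / (2 * b) = (y * sqrt n / b) / 2" for y by simp
  have part1: "c3 * lc_majorant (tailR_lin n) (1 + y * sqrt n / b) \<le> c3 * lc_majorant (tailR n) (y * sqrt n / b)"
    if y: "y * sqrt n / (2 * b) + real n / 2 \<le> real_of_int (j_star2 n)" for y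
  proof -
    have us: "0 < u_star" "u_star < 1" "psi u_star = 0" by (rule u_star_props)+
    have us2: "u_star \<le> 1/197" by (rule u_star_le)
    define w where "w = u_star2"
    have w: "w = u_star / (1 - u_star)" by (simp add: w_def u_star2_def)
    have w0: "0 < w" using us by (simp add: w)
    have w1: "w < 1" using us us2 by (simp add: w field_simps)
    have uw: "u_star = w / (1 + w)" using us by (simp add: w field_simps)
    define J where "J = nat (j_star2 n)"
    have jq: "real_of_int (j_star2 n) \<le> (real n - w) / (1 + w)"
      unfolding j_star2_def w_def by linarith
    have j0: "0 \<le> j_star2 n"
    proof -
      have "0 \<le> (real n - w) / (1 + w)" using w0 w1 assms(1) by simp
      hence "-1 < real_of_int (j_star2 n)" unfolding j_star2_def w_def by linarith
      thus ?thesis by simp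
    qed
    have JJ: "real J = real_of_int (j_star2 n)" using j0 by (simp add: J_def)
    have Jn: "J \<le> n"
    proof -
      have "(real n - w) / (1 + w) \<le> real n" using w0 by (simp add: field_simps)
      hence "real J \<le> real n" using jq JJ by linarith
      thus ?thesis by simp
    qed
    have good: "\<forall>s. 0 \<le> s \<and> s \<le> 1/2 \<longrightarrow> 0 \<le> phi u_star s"
      using psi_nonpos_phi[of u_star] us by simp
    have rat: "\<forall>j. j < J \<longrightarrow> u_star * Q n (int j) \<le> Q n (int j + 1)"
    proof (intro allI impI)
      fix j assume jJ: "j < J"
      have jn: "int j < int n" using jJ Jn by simp
      have "real j + 1 \<le> (real n - w) / (1 + w)" using jJ JJ jq by linarith
      hence "(real j + 1) * (1 + w) \<le> real n - w" using w0 by (simp add: field_simps)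
      hence "w * (real n + 1) \<le> (real n - real j) * (1 + w)" using w0 by (simp add: algebra_simps)
      hence "u_star \<le> (real n - real j) / (1 + real n)" unfolding uw using w0
        by (simp add: field_simps)
      hence "u_star * Q n (int j) \<le> (real n - real j) / (1 + real n) * Q n (int j)"
        using Q_nonneg by (intro mult_right_mono) auto
      also have "\<dots> \<le> Q n (int j + 1)" using Q_ratio[of "int j" n] jn by simp
      finally show "u_star * Q n (int j) \<le> Q n (int j + 1)" .
    qed
    have hh: "t / 2 + real n / 2 \<le> real J \<Longrightarrow> t \<le> 2 * real J - real n" for t :: real by linarith
    have z: "y * sqrt n / b \<le> 2 * real J - real n" using y JJ unfolding zc by (intro hh) simp
    show ?thesis using main_lemma[OF Jn us(1) good rat z] c3 by (rule mult_left_mono)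
  qed
  have part2: "c3 * lc_majorant (tailR_lin n) (1 + y * sqrt n / b) \<le> c3 * lc_majorant (tailR n) (y * sqrt n / b)"
    if n196: "n \<le> 196" and y: "y * sqrt n / (2 * b) + real n / 2 \<le> real n" for y
  proof -
    have good: "\<forall>s. 0 \<le> s \<and> s \<le> 1/2 \<longrightarrow> 0 \<le> phi (1/197) s"
      using psi_nonpos_phi[of "1/197"] psi_197 by simp
    have rat: "\<forall>j. j < n \<longrightarrow> 1/197 * Q n (int j) \<le> Q n (int j + 1)"
    proof (intro allI impI)
      fix j assume jn: "j < n"
      have "1/197 \<le> (real n - real j) / (1 + real n)" using jn n196 by (simp add: field_simps)
      hence "1/197 * Q n (int j) \<le> (real n - real j) / (1 + real n) * Q n (int j)"
        using Q_nonneg by (intro mult_right_mono) auto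
      also have "\<dots> \<le> Q n (int j + 1)" using Q_ratio[of "int j" n] jn by simp
      finally show "1/197 * Q n (int j) \<le> Q n (int j + 1)" .
    qed
    have hh: "t / 2 + real n / 2 \<le> real n \<Longrightarrow> t \<le> 2 * real n - real n" for t :: real by linarith
    have z: "y * sqrt n / b \<le> 2 * real n - real n" using y unfolding zc by (intro hh) simp
    show ?thesis using main_lemma[OF order.refl _ good rat z] c3 by (intro mult_left_mono) auto
  qed
  show ?thesis using part1 part2 by blast
qed


end
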